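(* Let $t \geq 1$ be an integer and let $\mathcal{F}$ be a finite family of finite sets with $\alpha(\mathcal{F}) \geq t$, $\mathcal{F}^{t,+} \neq \emptyset$ and $\mathcal{F}^{t,-} \neq \emptyset$. Suppose $k$ is an integer with $2 \leq k < \kappa(\mathcal{F},t)$ and $\mathcal{A}_1, \dots, \mathcal{A}_k$ are cross-$t$-intersecting sub-families of $\mathcal{F}$ such that $\sum_{i=1}^k |\mathcal{A}_i|$ is maximum among all $k$-tuples of cross-$t$-intersecting sub-families of $\mathcal{F}$. Then it is neither the case that $\mathcal{A}_i = \mathcal{F}$ for some $i \in [k]$ and $\mathcal{A}_j = \emptyset$ for all $j \in [k]\setminus\{i\}$, nor the case that $\mathcal{A}_1 = \dots = \mathcal{A}_k = \mathcal{L}$ for some largest $t$-intersecting sub-family $\mathcal{L}$ of $\mathcal{F}$.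
   Context: All sets and families are finite. A family $\mathcal{A}$ is $t$-intersecting if $|A \cap B| \geq t$ for all $A, B \in \mathcal{A}$ with $A \neq B$. Families $\mathcal{A}_1, \dots, \mathcal{A}_k$ (not necessarily distinct or non-empty) are cross-$t$-intersecting if for all $i \neq j$, $|A \cap B| \geq t$ for every $A \in \mathcal{A}_i$, $B \in \mathcal{A}_j$. $\alpha(\mathcal{F}) = \max\{|F| : F \in \mathcal{F}\}$; $l(\mathcal{F},t)$ is the size of a largest $t$-intersecting sub-family of $\mathcal{F}$. For a family $\mathcal{A}$, $\mathcal{A}^{t,+} = \{A \in \mathcal{A} : |A \cap B| \geq t \text{ for all } B \in \mathcal{A}\setminus\{A\}\}$ and $\mathcal{A}^{t,-} = \mathcal{A} \setminus \mathcal{A}^{t,+}$. For $\mathcal{A} \subseteq \mathcal{F}$, $\beta(\mathcal{F},t,\mathcal{A}) = \frac{l(\mathcal{F},t) - |\mathcal{A}^{t,+}|}{|\mathcal{A}^{t,-}|}$ if $\mathcal{A}^{t,-} \neq \emptyset$, and $\frac{l(\mathcal{F},t)}{|\mathcal{F}|}$ otherwise; $\beta(\mathcal{F},t) = \min_{\mathcal{A} \subseteq \mathcal{F}} \beta(\mathcal{F},t,\mathcal{A})$ and $\kappa(\mathcal{F},t) = 1/\beta(\mathcal{F},t)$. $[k] = \{1,\dots,k\}$. *)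

theory Defs
  imports Complex_Main
begin

definition alpha :: "'a set set \<Rightarrow> nat" where
  "alpha F = Max (card ` F)"

definition t_intersecting :: "nat \<Rightarrow> 'a set set \<Rightarrow> bool" where
  "t_intersecting t A \<longleftrightarrow> (\<forall>X\<in>A. \<forall>Y\<in>A. X \<noteq> Y \<longrightarrow> card (X \<inter> Y) \<ge> t)"

definition cross_t_intersecting :: "nat \<Rightarrow> nat \<Rightarrow> (nat \<Rightarrow> 'a set set) \<Rightarrow> bool" where
  "cross_t_intersecting t k A \<longleftrightarrow>
     (\<forall>i\<in>{1..k}. \<forall>j\<in>{1..k}. i \<noteq> j \<longrightarrow> (\<forall>X\<in>A i. \<forall>Y\<in>A j. card (X \<inter> Y) \<ge> t))"

definition lmax :: "'a set set \<Rightarrow> nat \<Rightarrow> nat" where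
  "lmax F t = Max {card G | G. G \<subseteq> F \<and> t_intersecting t G}"

definition tplus :: "nat \<Rightarrow> 'a set set \<Rightarrow> 'a set set" where
  "tplus t A = {X \<in> A. \<forall>Y\<in>A - {X}. card (X \<inter> Y) \<ge> t}"

definition tminus :: "nat \<Rightarrow> 'a set set \<Rightarrow> 'a set set" where
  "tminus t A = A - tplus t A"

definition beta_of :: "'a set set \<Rightarrow> nat \<Rightarrow> 'a set set \<Rightarrow> real" where
  "beta_of F t A =
     (if tminus t A \<noteq> {}
      then (real (lmax F t) - real (card (tplus t A))) / real (card (tminus t A))
      else real (lmax F t) / real (card F))"

definition beta :: "'a set set \<Rightarrow> nat \<Rightarrow> real" where
  "beta F t = Min {beta_of F t A | A. A \<subseteq> F}"

definition kappa :: "'a set set \<Rightarrow> nat \<Rightarrow> real" where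
  "kappa F t = 1 / beta F t"

end

theory Submission
  imports Defs
begin

lemma tplus_card:
  assumes "tminus t A \<noteq> {}" "Y \<in> tplus t A" "\<forall>X\<in>A. finite X"
  shows "card Y \<ge> t"
proof -
  obtain Z where Z: "Z \<in> A" "Z \<notin> tplus t A" using assms(1) unfolding tminus_def by auto
  have "Z \<noteq> Y" using Z assms(2) by auto
  hence "card (Y \<inter> Z) \<ge> t" using assms(2) Z unfolding tplus_def by auto
  moreover have "finite Y" using assms(2,3) unfolding tplus_def by auto
  ultimately show ?thesis by (meson card_mono inf_le1 le_trans)
qed

lemma tplus_sub: "tplus t A \<subseteq> A" unfolding tplus_def by auto

lemma sum_upd:
  fixes k j :: nat
  assumes "j \<in> {1..k}"
  shows "(\<Sum>m=1..k. card ((A(j := S)) m)) = (\<Sum>m=1..k. card (A m)) - card (A j) + card S"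
proof -
  have "(\<Sum>m=1..k. card ((A(j := S)) m)) = card ((A(j := S)) j) + (\<Sum>m\<in>{1..k}-{j}. card ((A(j := S)) m))"
    by (rule sum.remove) (use assms in auto)
  also have "(\<Sum>m\<in>{1..k}-{j}. card ((A(j := S)) m)) = (\<Sum>m\<in>{1..k}-{j}. card (A m))"
    by (intro sum.cong) auto
  finally have "(\<Sum>m=1..k. card ((A(j := S)) m)) = card S + (\<Sum>m\<in>{1..k}-{j}. card (A m))" by simp
  moreover have "(\<Sum>m=1..k. card (A m)) = card (A j) + (\<Sum>m\<in>{1..k}-{j}. card (A m))"
    using assms by (simp add: sum.remove)
  ultimately show ?thesis by simp
qed

theorem proposition4p5:
  fixes F :: "'a set set" and t k :: nat and A :: "nat \<Rightarrow> 'a set set"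
  assumes "t \<ge> 1"
    and "finite F" and "\<forall>X\<in>F. finite X"
    and "alpha F \<ge> t"
    and "tplus t F \<noteq> {}" and "tminus t F \<noteq> {}"
    and "2 \<le> k" and "real k < kappa F t"
    and "\<forall>i\<in>{1..k}. A i \<subseteq> F"
    and "cross_t_intersecting t k A"
    and "\<forall>B :: nat \<Rightarrow> 'a set set. (\<forall>i\<in>{1..k}. B i \<subseteq> F) \<and> cross_t_intersecting t k B
            \<longrightarrow> (\<Sum>i=1..k. card (B i)) \<le> (\<Sum>i=1..k. card (A i))"
  shows "\<not> (\<exists>i\<in>{1..k}. A i = F \<and> (\<forall>j\<in>{1..k} - {i}. A j = {}))
       \<and> \<not> (\<exists>L. L \<subseteq> F \<and> t_intersecting t L \<and> card L = lmax F t \<and> (\<forall>i\<in>{1..k}. A i = L))"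
proof
  note max = assms(11)
  show "\<not> (\<exists>i\<in>{1..k}. A i = F \<and> (\<forall>j\<in>{1..k} - {i}. A j = {}))"
  proof
    assume "\<exists>i\<in>{1..k}. A i = F \<and> (\<forall>j\<in>{1..k} - {i}. A j = {})"
    then obtain i where i: "i \<in> {1..k}" "A i = F" "\<forall>j\<in>{1..k} - {i}. A j = {}" by blast
    define j where "j = (if i = 1 then 2 else (1::nat))"
    have j: "j \<in> {1..k}" "j \<noteq> i" using i assms(7) unfolding j_def by auto
    have Aj: "A j = {}" using i j by auto
    define B where "B = A(j := tplus t F)"
    have sub: "\<forall>m\<in>{1..k}. B m \<subseteq> F" using assms(9) tplus_sub[of t F] unfolding B_def by auto
    have cr: "cross_t_intersecting t k B"
      unfolding cross_t_intersecting_def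
    proof (intro ballI impI)
      fix a b X Y assume ab: "a \<in> {1..k}" "b \<in> {1..k}" "a \<noteq> b" and X: "X \<in> B a" and Y: "Y \<in> B b"
      show "t \<le> card (X \<inter> Y)"
      proof (cases "a = j \<or> b = j")
        case True
        hence other: "(a = j \<and> b \<noteq> j) \<or> (b = j \<and> a \<noteq> j)" using ab by auto
        then consider "a = j" "b = i" | "b = j" "a = i" | "a = j" "b \<noteq> i" "b \<noteq> j" | "b = j" "a \<noteq> i" "a \<noteq> j" by blast
        then show ?thesis
        proof cases
          case 1
          hence XF: "X \<in> tplus t F" and YF: "Y \<in> F" using X Y i j unfolding B_def by auto
          show ?thesis
          proof (cases "X = Y")
            case True thus ?thesis using tplus_card[OF assms(6) XF assms(3)] by simp
          next
            case False thus ?thesis using XF YF unfolding tplus_def by auto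
          qed
        next
          case 2
          hence XF: "Y \<in> tplus t F" and YF: "X \<in> F" using X Y i j unfolding B_def by auto
          show ?thesis
          proof (cases "X = Y")
            case True thus ?thesis using tplus_card[OF assms(6) XF assms(3)] by simp
          next
            case False thus ?thesis using XF YF unfolding tplus_def by (auto simp: Int_commute)
          qed
        next
          case 3 thus ?thesis using Y i ab unfolding B_def by auto
        next
          case 4 thus ?thesis using X i ab unfolding B_def by auto
        qed
      next
        case False
        hence "X \<in> A a" "Y \<in> A b" using X Y unfolding B_def by auto
        thus ?thesis using assms(10) ab unfolding cross_t_intersecting_def by blast
      qed
    qed
    have "(\<Sum>m=1..k. card (B m)) = (\<Sum>m=1..k. card (A m)) + card (tplus t F)"
      unfolding B_def using sum_upd[OF j(1), of A "tplus t F"] Aj by simp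
    moreover have "card (tplus t F) > 0"
      using assms(5) assms(2) tplus_sub[of t F] by (meson card_gt_0_iff finite_subset)
    moreover have "(\<Sum>m=1..k. card (B m)) \<le> (\<Sum>m=1..k. card (A m))" using max sub cr by blast
    ultimately show False by linarith
  qed
next
  note max = assms(11)
  show "\<not> (\<exists>L. L \<subseteq> F \<and> t_intersecting t L \<and> card L = lmax F t \<and> (\<forall>i\<in>{1..k}. A i = L))"
  proof
    assume "\<exists>L. L \<subseteq> F \<and> t_intersecting t L \<and> card L = lmax F t \<and> (\<forall>i\<in>{1..k}. A i = L)"
    then obtain L where L: "card L = lmax F t" "\<forall>i\<in>{1..k}. A i = L" by blast
    have sumA: "(\<Sum>i=1..k. card (A i)) = k * lmax F t" using L by simp
    let ?S = "{beta_of F t A | A. A \<subseteq> F}"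
    have fin: "finite ?S" using assms(2) by simp
    have ne: "?S \<noteq> {}" by auto
    have "beta F t \<in> ?S" unfolding beta_def using Min_in[OF fin ne] .
    then obtain A0 where A0: "A0 \<subseteq> F" "beta F t = beta_of F t A0" by auto
    have kp: "real k < 1 / beta_of F t A0" using assms(8) A0 unfolding kappa_def by simp
    have bpos: "beta_of F t A0 > 0"
    proof (rule ccontr)
      assume "\<not> ?thesis"
      hence "1 / beta_of F t A0 \<le> 0" by (simp add: divide_le_0_iff)
      moreover have "real k \<ge> 0" by simp
      ultimately show False using kp by linarith
    qed
    have kb: "real k * beta_of F t A0 < 1" using kp bpos by (simp add: field_simps)
    show False
    proof (cases "tminus t A0 = {}")
      case True
      have Fpos: "card F > 0" using assms(2,5) using tplus_sub[of t F] card_gt_0_iff by blast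
      have "real k * (real (lmax F t) / real (card F)) < 1" using kb True unfolding beta_of_def by simp
      hence "real k * real (lmax F t) < real (card F)" using Fpos by (simp add: field_simps)
      hence lt: "k * lmax F t < card F" by (metis of_nat_less_iff of_nat_mult)
      define B :: "nat \<Rightarrow> 'a set set" where "B = (\<lambda>m. if m = 1 then F else {})"
      have sub: "\<forall>m\<in>{1..k}. B m \<subseteq> F" unfolding B_def by auto
      have cr: "cross_t_intersecting t k B" unfolding cross_t_intersecting_def B_def by auto
      have "(\<Sum>m=1..k. card (B m)) = (\<Sum>m=1..k. if m = 1 then card F else 0)"
        unfolding B_def by (intro sum.cong) auto
      also have "\<dots> = card F" using assms(7) by (simp add: sum.delta)
      finally have eqB: "(\<Sum>m=1..k. card (B m)) = card F" .
      have "(\<Sum>m=1..k. card (B m)) \<le> (\<Sum>m=1..k. card (A m))" using max sub cr by blast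
      thus False using eqB lt sumA by linarith
    next
      case False
      let ?p = "card (tplus t A0)" and ?q = "card (tminus t A0)"
      have finA0: "finite A0" using A0 assms(2) finite_subset by blast
      have qpos: "?q > 0" using False finA0 unfolding tminus_def by (simp add: card_gt_0_iff)
      have "real k * ((real (lmax F t) - real ?p) / real ?q) < 1" using kb False unfolding beta_of_def by simp
      hence "real k * (real (lmax F t) - real ?p) < real ?q" using qpos by (simp add: field_simps)
      hence "real (k * lmax F t) < real (?q + k * ?p)" by (simp add: algebra_simps)
      hence lt: "k * lmax F t < ?q + k * ?p" by linarith
      have c1: "?q = card A0 - ?p" unfolding tminus_def using finA0 tplus_sub[of t A0]
        by (simp add: card_Diff_subset finite_subset)
      have c2: "?p \<le> card A0" by (rule card_mono[OF finA0 tplus_sub])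
      have cA0: "card A0 = ?p + ?q" using c1 c2 by simp
      define B :: "nat \<Rightarrow> 'a set set" where "B = (\<lambda>m. if m = 1 then A0 else tplus t A0)"
      have sub: "\<forall>m\<in>{1..k}. B m \<subseteq> F" unfolding B_def using A0 tplus_sub[of t A0] by auto
      have fin: "\<forall>X\<in>A0. finite X" using A0 assms(3) by auto
      have key: "t \<le> card (X \<inter> Y)" if "X \<in> A0" "Y \<in> tplus t A0" for X Y
      proof (cases "X = Y")
        case True thus ?thesis using tplus_card[OF False that(2) fin] by simp
      next
        case ne: False thus ?thesis using that unfolding tplus_def by (auto simp: Int_commute)
      qed
      have cr: "cross_t_intersecting t k B" unfolding cross_t_intersecting_def
      proof (intro ballI impI)
        fix a b X Y assume ab: "a \<in> {1..k}" "b \<in> {1..k}" "a \<noteq> b" and X: "X \<in> B a" and Y: "Y \<in> B b"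
        show "t \<le> card (X \<inter> Y)"
        proof (cases "a = 1")
          case True
          hence "X \<in> A0" "Y \<in> tplus t A0" using X Y ab unfolding B_def by auto
          thus ?thesis using key by blast
        next
          case F1: False
          hence XP: "X \<in> tplus t A0" using X unfolding B_def by auto
          have "Y \<in> A0" using Y tplus_sub[of t A0] unfolding B_def by (auto split: if_splits)
          hence "t \<le> card (Y \<inter> X)" using key[OF _ XP] by blast
          thus ?thesis by (simp add: Int_commute)
        qed
      qed
      have "(\<Sum>m=1..k. card (B m)) = card (B 1) + (\<Sum>m\<in>{1..k}-{1}. card (B m))"
        by (rule sum.remove) (use assms(7) in auto)
      also have "(\<Sum>m\<in>{1..k}-{1}. card (B m)) = (\<Sum>m\<in>{1..k}-{1}. ?p)"
        unfolding B_def by (intro sum.cong) auto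
      also have "\<dots> = (k - 1) * ?p"
      proof -
        have "card ({1..k}-{1::nat}) = k - 1" using assms(7) by (simp add: card_Diff_singleton)
        thus ?thesis by simp
      qed
      finally have "(\<Sum>m=1..k. card (B m)) = ?p + ?q + (k - 1) * ?p" using cA0 unfolding B_def by simp
      also have "\<dots> = ?q + k * ?p"
      proof -
        obtain k' where "k = Suc k'" using assms(7) by (cases k) auto
        thus ?thesis by simp
      qed
      finally have eqB: "(\<Sum>m=1..k. card (B m)) = ?q + k * ?p" .
      have "(\<Sum>m=1..k. card (B m)) \<le> (\<Sum>m=1..k. card (A m))" using max sub cr by blast
      thus False using eqB lt sumA by linarith
    qed
  qed
qed

end
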